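(* Let $u:\mathbb{R}^n\supseteq\bigcup_{l}P_l\to\mathbb{R}^m$ be a continuous piecewise affine function with $u(z)=F_lz+G_l$ for $z\in P_l$, $l=1,\dots,n_r$, where $F_l\in\mathbb{R}^{m\times n}$, $G_l\in\mathbb{R}^m$ and $P_l=\{z\in\mathbb{R}^n: H_lz\le K_l\}$ are polyhedra. Let $i\neq j$ and let the hyperplane $hz=k$ ($h\in\mathbb{R}^{1\times n}\setminus\{0\}$, $k\in\mathbb{R}$) border $P_i$ and $P_j$, with $hz\le k$ for $z\in P_j$ and $hz\ge k$ for $z\in P_i$. Let $\epsilon\ge0$ and let the quantized data be $\hat F_i=F_i+\Delta F_i$, $\hat G_i=G_i+\Delta G_i$, $\hat h=h+\Delta h$, $\hat k=k+\Delta k$, $\hat x=x+\Delta x$, where every entry of $\Delta F_i,\Delta G_i,\Delta h,\Delta k,\Delta x$ has absolute value at most $\epsilon$. Let $x\in P_j$, suppose the orthogonal projection $x_p$ of $x$ onto the hyperplane $\{z:hz=k\}$ lies in $P_i\cap P_j$ (the common facet), and suppose $\hat h\hat x\ge\hat k$ (the quantized state lies on the $\hat P_i$ side of the quantized hyperplane), with the quantized control given by $\hat u(\hat x)=\hat F_i\hat x+\hat G_i$. Then, with $\delta=\epsilon(\|h\|_1+\|x\|_1+n\epsilon+1)$, $$\|\hat u(\hat x)-u(x)\|_\infty\le \frac{\delta}{\|h\|_2^2}\,\|(F_i-F_j)h'\|_\infty+\|F_i\Delta x+\Delta F_ix+\Delta F_i\Delta x+\Delta G_i\|_\infty,$$ and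 moreover $$\|F_i\Delta x+\Delta F_ix+\Delta F_i\Delta x+\Delta G_i\|_\infty\le \|\Delta F_i\|_\infty\|x\|_\infty+\|\Delta G_i\|_\infty+\|\hat F_i\|_\infty\,\epsilon \quad\text{(a posteriori bound)},$$ as well as $$\|F_i\Delta x+\Delta F_ix+\Delta F_i\Delta x+\Delta G_i\|_\infty\le \epsilon\left(\|F_i\|_\infty+n\|x\|_\infty+n\epsilon+1\right)\quad\text{(a priori bound)}.$$
   Context: $h'$ denotes the transpose of $h$. For vectors, $\|\cdot\|_1,\|\cdot\|_2,\|\cdot\|_\infty$ are the usual $1$-, $2$-, $\infty$-norms; for a matrix $M$, $\|M\|_\infty$ is the induced $\infty$-norm (maximum absolute row sum). Here $u(x)=F_jx+G_j$ is the exact control (explicit MPC feedback law) at the true state $x\in P_j$, and $\hat u(\hat x)$ is the control computed by the controller from quantized data, in which the quantized state is located in the quantized region $\hat P_i$. Continuity of $u$ means $F_iz+G_i=F_jz+G_j$ for all $z\in P_i\cap P_j$. *)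

theory Defs
  imports "HOL-Analysis.Analysis"
begin

text \<open>Vector 1-norm and infinity-norm on real^'n; induced infinity-norm of a matrix
  (maximum absolute row sum). The 2-norm is the library norm.\<close>

definition vnorm1 :: "real^'n \<Rightarrow> real" where
  "vnorm1 x = (\<Sum>i\<in>UNIV. \<bar>x $ i\<bar>)"

definition vnorm_inf :: "real^'n \<Rightarrow> real" where
  "vnorm_inf x = Max (range (\<lambda>i. \<bar>x $ i\<bar>))"

definition mnorm_inf :: "real^'n^'m \<Rightarrow> real" where
  "mnorm_inf M = Max (range (\<lambda>i. \<Sum>j\<in>UNIV. \<bar>M $ i $ j\<bar>))"

definition hyperplane_proj :: "real^'n \<Rightarrow> real \<Rightarrow> real^'n \<Rightarrow> real^'n" where
  "hyperplane_proj h k x = x - ((h \<bullet> x - k) / (norm h)\<^sup>2) *\<^sub>R h"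

end

theory Submission
  imports Defs
begin

lemma mv_scale: "(A::real^'n^'m) *v (c *\<^sub>R v) = c *\<^sub>R (A *v v)"
  by (simp add: vec_eq_iff matrix_vector_mult_def sum_distrib_left algebra_simps)

lemma vinf_le_iff: "vnorm_inf (v::real^'n) \<le> c \<longleftrightarrow> (\<forall>i. \<bar>v$i\<bar> \<le> c)"
  unfolding vnorm_inf_def by (subst Max_le_iff) auto

lemma vinf_ge: "\<bar>(v::real^'n)$i\<bar> \<le> vnorm_inf v"
  unfolding vnorm_inf_def by (rule Max_ge) auto

lemma minf_ge: "(\<Sum>j\<in>UNIV. \<bar>(M::real^'n^'m)$i$j\<bar>) \<le> mnorm_inf M"
  unfolding mnorm_inf_def by (rule Max_ge) auto

lemma vinf_nonneg: "0 \<le> vnorm_inf (v::real^'n)"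
  using vinf_ge[of v undefined] by linarith

lemma vinf_triangle: "vnorm_inf ((a::real^'n) + b) \<le> vnorm_inf a + vnorm_inf b"
  unfolding vinf_le_iff
proof
  fix i
  have "\<bar>(a+b)$i\<bar> \<le> \<bar>a$i\<bar> + \<bar>b$i\<bar>" by simp
  thus "\<bar>(a+b)$i\<bar> \<le> vnorm_inf a + vnorm_inf b" using vinf_ge[of a i] vinf_ge[of b i] by linarith
qed

lemma vinf_scale: "vnorm_inf (c *\<^sub>R (v::real^'n)) \<le> \<bar>c\<bar> * vnorm_inf v"
  unfolding vinf_le_iff
proof
  fix i
  show "\<bar>(c *\<^sub>R v)$i\<bar> \<le> \<bar>c\<bar> * vnorm_inf v"
    using vinf_ge[of v i] by (simp add: abs_mult mult_left_mono)
qed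

lemma mv_bound: "vnorm_inf ((M::real^'n^'m) *v v) \<le> mnorm_inf M * vnorm_inf v"
  unfolding vinf_le_iff
proof
  fix i
  have "\<bar>(M *v v)$i\<bar> = \<bar>\<Sum>j\<in>UNIV. M$i$j * v$j\<bar>" by (simp add: matrix_vector_mult_def)
  also have "\<dots> \<le> (\<Sum>j\<in>UNIV. \<bar>M$i$j\<bar> * vnorm_inf v)"
    by (rule order_trans[OF sum_abs]) (auto intro!: sum_mono mult_left_mono simp: abs_mult vinf_ge)
  also have "\<dots> = (\<Sum>j\<in>UNIV. \<bar>M$i$j\<bar>) * vnorm_inf v" by (simp add: sum_distrib_right)
  also have "\<dots> \<le> mnorm_inf M * vnorm_inf v"
    by (rule mult_right_mono[OF minf_ge vinf_nonneg])
  finally show "\<bar>(M *v v)$i\<bar> \<le> mnorm_inf M * vnorm_inf v" .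
qed

lemma rowsum_bound:
  assumes "\<forall>r c. \<bar>(M::real^'n^'m) $ r $ c\<bar> \<le> e"
  shows "mnorm_inf M \<le> real CARD('n) * e"
  unfolding mnorm_inf_def
proof (subst Max_le_iff, auto)
  fix i
  have "(\<Sum>j\<in>UNIV. \<bar>M$i$j\<bar>) \<le> (\<Sum>j\<in>(UNIV::'n set). e)" by (rule sum_mono) (use assms in auto)
  thus "(\<Sum>j\<in>UNIV. \<bar>M$i$j\<bar>) \<le> real CARD('n) * e" by simp
qed

lemma inner_bound:
  assumes "\<forall>c. \<bar>(d::real^'n) $ c\<bar> \<le> e"
  shows "\<bar>y \<bullet> d\<bar> \<le> e * vnorm1 y"
proof -
  have "\<bar>y \<bullet> d\<bar> = \<bar>\<Sum>i\<in>UNIV. y$i * d$i\<bar>" by (simp add: inner_vec_def)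
  also have "\<dots> \<le> (\<Sum>i\<in>UNIV. \<bar>y$i\<bar> * e)"
    by (rule order_trans[OF sum_abs]) (auto intro!: sum_mono mult_left_mono simp: abs_mult assms)
  also have "\<dots> = e * vnorm1 y" by (simp add: vnorm1_def sum_distrib_left mult.commute)
  finally show ?thesis .
qed

lemma inner_bound2:
  assumes "\<forall>c. \<bar>(d::real^'n) $ c\<bar> \<le> e" "\<forall>c. \<bar>(y::real^'n) $ c\<bar> \<le> e" "e \<ge> 0"
  shows "\<bar>y \<bullet> d\<bar> \<le> real CARD('n) * e * e"
proof -
  have "\<bar>y \<bullet> d\<bar> = \<bar>\<Sum>i\<in>UNIV. y$i * d$i\<bar>" by (simp add: inner_vec_def)
  also have "\<dots> \<le> (\<Sum>i\<in>(UNIV::'n set). e * e)"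
  proof (rule order_trans[OF sum_abs], rule sum_mono)
    fix i show "\<bar>y$i * d$i\<bar> \<le> e * e" unfolding abs_mult by (rule mult_mono) (use assms in auto)
  qed
  also have "\<dots> = real CARD('n) * e * e" by simp
  finally show ?thesis .
qed

theorem theorem1:
  fixes u :: "real^'n \<Rightarrow> real^'m"
    and F :: "nat \<Rightarrow> real^'n^'m" and G :: "nat \<Rightarrow> real^'m"
    and P :: "nat \<Rightarrow> (real^'n) set"
    and nr i j :: nat
    and h :: "real^'n" and k :: real
    and \<epsilon> :: real
    and dF :: "real^'n^'m" and dG :: "real^'m" and dh :: "real^'n" and dk :: real
    and x dx :: "real^'n"
  assumes polys: "\<forall>l\<in>{1..nr}. polyhedron (P l)"
    and u_def: "\<forall>l\<in>{1..nr}. \<forall>z\<in>P l. u z = F l *v z + G l"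
    and cont: "\<forall>l1\<in>{1..nr}. \<forall>l2\<in>{1..nr}. \<forall>z\<in>P l1 \<inter> P l2.
                 F l1 *v z + G l1 = F l2 *v z + G l2"
    and ij: "i \<in> {1..nr}" "j \<in> {1..nr}" "i \<noteq> j"
    and h_nz: "h \<noteq> 0"
    and side_j: "\<forall>z\<in>P j. h \<bullet> z \<le> k"
    and side_i: "\<forall>z\<in>P i. h \<bullet> z \<ge> k"
    and eps: "\<epsilon> \<ge> 0"
    and dF_bd: "\<forall>r c. \<bar>dF $ r $ c\<bar> \<le> \<epsilon>"
    and dG_bd: "\<forall>r. \<bar>dG $ r\<bar> \<le> \<epsilon>"
    and dh_bd: "\<forall>c. \<bar>dh $ c\<bar> \<le> \<epsilon>"
    and dk_bd: "\<bar>dk\<bar> \<le> \<epsilon>"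
    and dx_bd: "\<forall>c. \<bar>dx $ c\<bar> \<le> \<epsilon>"
    and xPj: "x \<in> P j"
    and proj: "hyperplane_proj h k x \<in> P i \<inter> P j"
    and quant_side: "(h + dh) \<bullet> (x + dx) \<ge> k + dk"
  shows "let \<delta> = \<epsilon> * (vnorm1 h + vnorm1 x + real CARD('n) * \<epsilon> + 1);
             uhat = (F i + dF) *v (x + dx) + (G i + dG);
             E = F i *v dx + dF *v x + dF *v dx + dG
         in vnorm_inf (uhat - u x)
              \<le> \<delta> / (norm h)\<^sup>2 * vnorm_inf ((F i - F j) *v h) + vnorm_inf E
          \<and> vnorm_inf E \<le> mnorm_inf dF * vnorm_inf x + vnorm_inf dG + mnorm_inf (F i + dF) * \<epsilon>
          \<and> vnorm_inf E \<le> \<epsilon> * (mnorm_inf (F i) + real CARD('n) * vnorm_inf x + real CARD('n) * \<epsilon> + 1)"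
proof -
  define \<delta> where "\<delta> = \<epsilon> * (vnorm1 h + vnorm1 x + real CARD('n) * \<epsilon> + 1)"
  define E where "E = F i *v dx + dF *v x + dF *v dx + dG"
  define xp where "xp = hyperplane_proj h k x"
  define t where "t = (h \<bullet> x - k) / (norm h)\<^sup>2"
  have xp: "xp = x - t *\<^sub>R h" unfolding xp_def t_def hyperplane_proj_def by simp
  have ux: "u x = F j *v x + G j" using u_def ij xPj by auto
  have c: "F i *v xp + G i = F j *v xp + G j" using cont ij proj unfolding xp_def by blast
  have dxinf: "vnorm_inf dx \<le> \<epsilon>" using dx_bd vinf_le_iff by blast
  have key: "(F i + dF) *v (x + dx) + (G i + dG) - u x = t *\<^sub>R ((F i - F j) *v h) + E"
  proof -
    have "(F i + dF) *v (x + dx) + (G i + dG) - u x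
        = (F i *v x + G i) - (F j *v x + G j) + E"
      unfolding ux E_def by (simp add: matrix_vector_right_distrib matrix_vector_mult_add_rdistrib algebra_simps)
    also have "(F i *v x + G i) - (F j *v x + G j) = (F i *v xp + G i) - (F j *v xp + G j) + t *\<^sub>R ((F i - F j) *v h)"
      unfolding xp by (simp add: matrix_vector_right_distrib matrix_vector_mult_diff_rdistrib
          matrix_vector_mult_diff_distrib mv_scale algebra_simps)
    finally show ?thesis using c by simp
  qed
  have hx: "h \<bullet> x \<le> k" using side_j xPj by blast
  have "k - h \<bullet> x \<le> h \<bullet> dx + dh \<bullet> x + dh \<bullet> dx - dk"
    using quant_side by (simp add: inner_add_left inner_add_right)
  moreover have "h \<bullet> dx \<le> \<epsilon> * vnorm1 h" using inner_bound[OF dx_bd, of h] by linarith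
  moreover have "dh \<bullet> x \<le> \<epsilon> * vnorm1 x" using inner_bound[OF dh_bd, of x] by (simp add: inner_commute)
  moreover have "dh \<bullet> dx \<le> real CARD('n) * \<epsilon> * \<epsilon>" using inner_bound2[OF dx_bd dh_bd eps] by linarith
  ultimately have hxd: "\<bar>h \<bullet> x - k\<bar> \<le> \<delta>" using hx dk_bd unfolding \<delta>_def by (simp add: algebra_simps)
  have nh: "(norm h)\<^sup>2 > 0" using h_nz by simp
  have tb: "\<bar>t\<bar> \<le> \<delta> / (norm h)\<^sup>2" unfolding t_def using nh hxd
    by (simp add: abs_div divide_right_mono)
  have part1: "vnorm_inf ((F i + dF) *v (x + dx) + (G i + dG) - u x)
      \<le> \<delta> / (norm h)\<^sup>2 * vnorm_inf ((F i - F j) *v h) + vnorm_inf E"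
  proof -
    have a: "vnorm_inf (t *\<^sub>R ((F i - F j) *v h)) \<le> \<delta> / (norm h)\<^sup>2 * vnorm_inf ((F i - F j) *v h)"
      by (rule order_trans[OF vinf_scale mult_right_mono[OF tb vinf_nonneg]])
    show ?thesis unfolding key using vinf_triangle[of "t *\<^sub>R ((F i - F j) *v h)" E] a by linarith
  qed
  have E2: "E = (F i + dF) *v dx + dF *v x + dG" unfolding E_def
    by (simp add: matrix_vector_mult_add_rdistrib algebra_simps)
  have part2: "vnorm_inf E \<le> mnorm_inf dF * vnorm_inf x + vnorm_inf dG + mnorm_inf (F i + dF) * \<epsilon>"
  proof -
    have "vnorm_inf E \<le> vnorm_inf ((F i + dF) *v dx) + vnorm_inf (dF *v x) + vnorm_inf dG"
      unfolding E2 using vinf_triangle[of "(F i + dF) *v dx + dF *v x" dG] vinf_triangle[of "(F i + dF) *v dx" "dF *v x"] by linarith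
    moreover have "vnorm_inf ((F i + dF) *v dx) \<le> mnorm_inf (F i + dF) * \<epsilon>"
    proof -
      have "mnorm_inf (F i + dF) \<ge> 0"
        using minf_ge[of "F i + dF" undefined] sum_nonneg[of UNIV "\<lambda>j. \<bar>(F i + dF)$undefined$j\<bar>"] by linarith
      thus ?thesis using mv_bound[of "F i + dF" dx] mult_left_mono[OF dxinf] by (meson order_trans)
    qed
    ultimately show ?thesis using mv_bound[of dF x] by linarith
  qed
  have part3: "vnorm_inf E \<le> \<epsilon> * (mnorm_inf (F i) + real CARD('n) * vnorm_inf x + real CARD('n) * \<epsilon> + 1)"
  proof -
    have "vnorm_inf E \<le> vnorm_inf (F i *v dx) + vnorm_inf (dF *v x) + vnorm_inf (dF *v dx) + vnorm_inf dG"
      unfolding E_def using vinf_triangle[of "F i *v dx + dF *v x + dF *v dx" dG] vinf_triangle[of "F i *v dx + dF *v x" "dF *v dx"] vinf_triangle[of "F i *v dx" "dF *v x"] by linarith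
    moreover have "vnorm_inf (F i *v dx) \<le> mnorm_inf (F i) * \<epsilon>"
    proof -
      have "mnorm_inf (F i) \<ge> 0"
        using minf_ge[of "F i" undefined] sum_nonneg[of UNIV "\<lambda>j. \<bar>(F i)$undefined$j\<bar>"] by linarith
      thus ?thesis using mv_bound[of "F i" dx] mult_left_mono[OF dxinf] by (meson order_trans)
    qed
    moreover have "vnorm_inf (dF *v x) \<le> real CARD('n) * \<epsilon> * vnorm_inf x"
      using mv_bound[of dF x] mult_right_mono[OF rowsum_bound[OF dF_bd] vinf_nonneg[of x]] by linarith
    moreover have "vnorm_inf (dF *v dx) \<le> real CARD('n) * \<epsilon> * \<epsilon>"
    proof -
      have "mnorm_inf dF * vnorm_inf dx \<le> real CARD('n) * \<epsilon> * \<epsilon>"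
        using rowsum_bound[OF dF_bd] dxinf vinf_nonneg[of dx] eps
        by (meson mult_mono mult_nonneg_nonneg of_nat_0_le_iff)
      thus ?thesis using mv_bound[of dF dx] by linarith
    qed
    moreover have "vnorm_inf dG \<le> \<epsilon>" using dG_bd vinf_le_iff by blast
    ultimately show ?thesis by (simp add: algebra_simps)
  qed
  show ?thesis unfolding Let_def using part1 part2 part3 unfolding \<delta>_def E_def by blast
qed

end
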